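(* Let $R$ be a field, $S$ an idempotent semifield and $v:R\to S$ a surjective B\'ezout valuation. Then $\operatorname{Frac}(R^\circ)=R$, $R^\circ$ is a B\'ezout domain, and $v$ is isomorphic to the valuation $\operatorname{Frac}(\pi):\operatorname{Frac}(R^\circ)\to\operatorname{Frac}(\Gamma(R^\circ))$; i.e. there is a semifield isomorphism $\Phi:\operatorname{Frac}(\Gamma(R^\circ))\to S$ with $v=\Phi\circ\operatorname{Frac}(\pi)$.
   Context: An idempotent semiring is commutative with $a+a=a$, ordered by $a\le b$ iff $a+b=b$; a semifield has nonzero elements invertible. A valuation $v:R\to S$ satisfies $v(0)=0$, $v(1)=v(-1)=1$, $v(ab)=v(a)v(b)$, $v(a+b)\le v(a)+v(b)$, $v(a)\ne0$ for $a\ne0$. $R^\circ=\{a:v(a)\le1\}$. $v$ is B\'ezout if for all $a,b\in R$ there are $x,y\in R^\circ$ with $v(xa+yb)=v(a)+v(b)$. For a B\'ezout domain $D$ (every finitely generated ideal principal), $\Gamma(D)=D/U(D)$ is the set of classes of elements up to units, an idempotent semiring with $[a][b]=[ab]$ and $[a]+[b]=[\gcd(a,b)]$; $\pi:D\to\Gamma(D)$ is the projection; $\Gamma(D)$ is multiplicatively cancellative and $\operatorname{Frac}(\pi)(a/b)=\pi(a)/\pi(b)$. *)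

theory Defs
  imports Main
begin

class idem_semifield = comm_semiring_1 +
  assumes add_idem: "a + a = a"
    and mult_inv_ex: "a \<noteq> 0 \<Longrightarrow> \<exists>b. a * b = 1"

definition ple :: "'b::idem_semifield \<Rightarrow> 'b \<Rightarrow> bool" where
  "ple a b \<longleftrightarrow> a + b = b"

definition valuation :: "('a::field \<Rightarrow> 'b::idem_semifield) \<Rightarrow> bool" where
  "valuation v \<longleftrightarrow>
     v 0 = 0 \<and> v 1 = 1 \<and> v (-1) = 1 \<and>
     (\<forall>a b. v (a * b) = v a * v b) \<and>
     (\<forall>a b. ple (v (a + b)) (v a + v b)) \<and>
     (\<forall>a. a \<noteq> 0 \<longrightarrow> v a \<noteq> 0)"

definition Rcirc :: "('a::field \<Rightarrow> 'b::idem_semifield) \<Rightarrow> 'a set" where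
  "Rcirc v = {a. ple (v a) 1}"

definition bezout_valuation :: "('a::field \<Rightarrow> 'b::idem_semifield) \<Rightarrow> bool" where
  "bezout_valuation v \<longleftrightarrow>
     (\<forall>a b. \<exists>x\<in>Rcirc v. \<exists>y\<in>Rcirc v. v (x * a + y * b) = v a + v b)"

definition subring_of :: "'a::field set \<Rightarrow> bool" where
  "subring_of A \<longleftrightarrow> 0 \<in> A \<and> 1 \<in> A \<and> (\<forall>a\<in>A. -a \<in> A) \<and>
     (\<forall>a\<in>A. \<forall>b\<in>A. a + b \<in> A) \<and> (\<forall>a\<in>A. \<forall>b\<in>A. a * b \<in> A)"

definition frac_in :: "'a::field set \<Rightarrow> 'a set" where
  "frac_in A = {a / b | a b. a \<in> A \<and> b \<in> A \<and> b \<noteq> 0}"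

definition ideal_gen :: "'a::field set \<Rightarrow> 'a set \<Rightarrow> 'a set" where
  "ideal_gen A F = {\<Sum>f\<in>F. c f * f | c. \<forall>f\<in>F. c f \<in> A}"

text \<open>A Bezout domain: a (sub)ring of a field (hence an integral domain) in which every
  finitely generated ideal is principal.\<close>
definition bezout_domain :: "'a::field set \<Rightarrow> bool" where
  "bezout_domain A \<longleftrightarrow> subring_of A \<and>
     (\<forall>F. finite F \<and> F \<subseteq> A \<longrightarrow> (\<exists>d\<in>A. ideal_gen A F = {x * d | x. x \<in> A}))"

definition divides_in :: "'a::field set \<Rightarrow> 'a \<Rightarrow> 'a \<Rightarrow> bool" where
  "divides_in A d a \<longleftrightarrow> (\<exists>x\<in>A. a = x * d)"

definition is_gcd_in :: "'a::field set \<Rightarrow> 'a \<Rightarrow> 'a \<Rightarrow> 'a \<Rightarrow> bool" where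
  "is_gcd_in A a b d \<longleftrightarrow> d \<in> A \<and> divides_in A d a \<and> divides_in A d b \<and>
     (\<forall>e\<in>A. divides_in A e a \<and> divides_in A e b \<longrightarrow> divides_in A e d)"

definition units_in :: "'a::field set \<Rightarrow> 'a set" where
  "units_in A = {u \<in> A. \<exists>w\<in>A. u * w = 1}"

definition gclass :: "'a::field set \<Rightarrow> 'a \<Rightarrow> 'a set" where
  "gclass A a = {a * u | u. u \<in> units_in A}"

definition Gamma :: "'a::field set \<Rightarrow> 'a set set" where
  "Gamma A = gclass A ` A"

definition gamma_add :: "'a::field set \<Rightarrow> 'a set \<Rightarrow> 'a set \<Rightarrow> 'a set" where
  "gamma_add A p q = gclass A (SOME d. is_gcd_in A (SOME a. a \<in> p) (SOME b. b \<in> q) d)"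

definition gamma_mult :: "'a::field set \<Rightarrow> 'a set \<Rightarrow> 'a set \<Rightarrow> 'a set" where
  "gamma_mult A p q = gclass A ((SOME a. a \<in> p) * (SOME b. b \<in> q))"

definition fg_pairs :: "'a::field set \<Rightarrow> ('a set \<times> 'a set) set" where
  "fg_pairs A = Gamma A \<times> (Gamma A - {gclass A 0})"

definition fg_class :: "'a::field set \<Rightarrow> 'a set \<times> 'a set \<Rightarrow> ('a set \<times> 'a set) set" where
  "fg_class A pq = {pq' \<in> fg_pairs A.
      gamma_mult A (fst pq) (snd pq') = gamma_mult A (fst pq') (snd pq)}"

definition FracGamma :: "'a::field set \<Rightarrow> ('a set \<times> 'a set) set set" where
  "FracGamma A = fg_class A ` fg_pairs A"

definition fg_add :: "'a::field set \<Rightarrow> ('a set \<times> 'a set) set \<Rightarrow> ('a set \<times> 'a set) set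
    \<Rightarrow> ('a set \<times> 'a set) set" where
  "fg_add A X Y = (let (p, q) = (SOME z. z \<in> X); (p', q') = (SOME z. z \<in> Y) in
     fg_class A (gamma_add A (gamma_mult A p q') (gamma_mult A p' q), gamma_mult A q q'))"

definition fg_mult :: "'a::field set \<Rightarrow> ('a set \<times> 'a set) set \<Rightarrow> ('a set \<times> 'a set) set
    \<Rightarrow> ('a set \<times> 'a set) set" where
  "fg_mult A X Y = (let (p, q) = (SOME z. z \<in> X); (p', q') = (SOME z. z \<in> Y) in
     fg_class A (gamma_mult A p p', gamma_mult A q q'))"

definition fg_zero :: "'a::field set \<Rightarrow> ('a set \<times> 'a set) set" where
  "fg_zero A = fg_class A (gclass A 0, gclass A 1)"

definition fg_one :: "'a::field set \<Rightarrow> ('a set \<times> 'a set) set" where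
  "fg_one A = fg_class A (gclass A 1, gclass A 1)"

definition frac_pi :: "'a::field set \<Rightarrow> 'a \<Rightarrow> ('a set \<times> 'a set) set" where
  "frac_pi A r = (let (a, b) = (SOME (a, b). a \<in> A \<and> b \<in> A \<and> b \<noteq> 0 \<and> r = a / b) in
     fg_class A (gclass A a, gclass A b))"

end

theory Submission
  imports Defs
begin

section \<open>Semifield facts\<close>

lemma ple_refl: "ple (a::'b::idem_semifield) a"
  by (simp add: ple_def add_idem)

lemma ple_trans: "ple (a::'b::idem_semifield) b \<Longrightarrow> ple b c \<Longrightarrow> ple a c"
  unfolding ple_def by (metis add.assoc)

lemma ple_antisym: "ple (a::'b::idem_semifield) b \<Longrightarrow> ple b a \<Longrightarrow> a = b"
  unfolding ple_def by (metis add.commute)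

lemma ple_add1: "ple (a::'b::idem_semifield) (a + b)"
  unfolding ple_def by (metis add.assoc add_idem)

lemma ple_add2: "ple (b::'b::idem_semifield) (a + b)"
  using ple_add1[of b a] by (simp add: add.commute)

lemma ple_add_mono: "ple (a::'b::idem_semifield) b \<Longrightarrow> ple c d \<Longrightarrow> ple (a + c) (b + d)"
proof -
  assume "ple a b" "ple c d"
  then have h: "a + b = b" "c + d = d" by (auto simp: ple_def)
  have "(a+c)+(b+d) = (a+b)+(c+d)" by (simp add: ac_simps)
  then show ?thesis using h by (simp add: ple_def)
qed

lemma ple_mult: "ple (a::'b::idem_semifield) b \<Longrightarrow> ple (a*c) (b*c)"
  unfolding ple_def by (metis distrib_right)

lemma ple_zero: "ple (a::'b::idem_semifield) 0 \<Longrightarrow> a = 0" by (simp add: ple_def)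

lemma ple_0: "ple 0 (a::'b::idem_semifield)" by (simp add: ple_def)

lemma add_eq_0_idem: "(a::'b::idem_semifield) + b = 0 \<Longrightarrow> a = 0"
  by (metis ple_add1 ple_zero)

lemma ple_11: "ple (a::'b::idem_semifield) 1 \<Longrightarrow> ple b 1 \<Longrightarrow> ple (a + b) 1"
  using ple_add_mono[of a 1 b 1] by (simp add: add_idem)

lemma ple_mult1: "ple (a::'b::idem_semifield) 1 \<Longrightarrow> ple (a * b) b"
  using ple_mult[of a 1 b] by simp

definition sinv :: "'b::idem_semifield \<Rightarrow> 'b" where "sinv a = (SOME b. a * b = 1)"

lemma sinv: "(a::'b::idem_semifield) \<noteq> 0 \<Longrightarrow> a * sinv a = 1"
  unfolding sinv_def by (rule someI_ex) (rule mult_inv_ex)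

lemma sf_cancel: "(a::'b::idem_semifield) \<noteq> 0 \<Longrightarrow> a * x = a * y \<Longrightarrow> x = y"
proof -
  assume a: "a \<noteq> 0" and e: "a * x = a * y"
  have "sinv a * (a * x) = sinv a * (a * y)" using e by simp
  then show "x = y" using sinv[OF a] by (simp add: mult.assoc[symmetric] mult.commute)
qed

lemma sf_nzd: "(a::'b::idem_semifield) \<noteq> 0 \<Longrightarrow> b \<noteq> 0 \<Longrightarrow> a * b \<noteq> 0"
  by (metis mult_zero_right sf_cancel)

lemma sinv_nz: "(a::'b::idem_semifield) \<noteq> 0 \<Longrightarrow> sinv a \<noteq> 0"
  using sinv[of a] by auto

lemma sinv_mult: "(a::'b::idem_semifield) \<noteq> 0 \<Longrightarrow> b \<noteq> 0 \<Longrightarrow> sinv (a * b) = sinv a * sinv b"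
proof -
  assume a: "a \<noteq> 0" and b: "b \<noteq> 0"
  have "(a*b) * sinv (a*b) = 1" using sinv sf_nzd[OF a b] by blast
  moreover have "(a*b) * (sinv a * sinv b) = (a * sinv a) * (b * sinv b)" by (simp add: ac_simps)
  ultimately show ?thesis using sinv[OF a] sinv[OF b] sf_cancel[OF sf_nzd[OF a b]] by simp
qed

lemma sinv_1: "sinv (1::'b::idem_semifield) = 1"
  using sinv[of "1::'b"] by simp

lemma ratio_eq:
  fixes s t a b :: "'b::idem_semifield"
  assumes b: "b \<noteq> 0" and t: "t \<noteq> 0"
  shows "s * b = a * t \<longleftrightarrow> s * sinv t = a * sinv b"
proof
  assume e: "s * b = a * t"
  have "s * sinv t = (s * b) * (sinv t * sinv b)" using sinv[OF b]
    by (metis mult.assoc mult.commute mult_1_right)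
  also have "\<dots> = (a * t) * (sinv t * sinv b)" using e by simp
  also have "\<dots> = a * sinv b" using sinv[OF t]
    by (metis mult.assoc mult.commute mult_1_right)
  finally show "s * sinv t = a * sinv b" .
next
  assume e: "s * sinv t = a * sinv b"
  have "s * b = (s * sinv t) * (t * b)" using sinv[OF t]
    by (metis mult.assoc mult.commute mult_1_right)
  also have "\<dots> = (a * sinv b) * (t * b)" using e by simp
  also have "\<dots> = a * t" using sinv[OF b]
    by (metis mult.assoc mult.commute mult_1_right)
  finally show "s * b = a * t" .
qed

lemma ple_sum_mono:
  assumes "\<And>i. i\<in>F \<Longrightarrow> ple (g i) (h i)"
  shows "ple (\<Sum>i\<in>F. g i) (\<Sum>i\<in>F. (h i::'b::idem_semifield))"
  using assms by (induction F rule: infinite_finite_induct) (auto intro: ple_add_mono simp: ple_refl)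

lemma sum_ple_1:
  assumes "\<And>i. i\<in>F \<Longrightarrow> ple (g i) 1"
  shows "ple (\<Sum>i\<in>F. g i) (1::'b::idem_semifield)"
  using assms by (induction F rule: infinite_finite_induct) (auto intro: ple_11 simp: ple_0)

locale bzv =
  fixes v :: "'a::field \<Rightarrow> 'b::idem_semifield"
  assumes val: "valuation v" and sur: "surj v" and bez: "bezout_valuation v"
begin

abbreviation "A \<equiv> Rcirc v"

lemma v0: "v 0 = 0" and v1: "v 1 = 1" and vm1: "v (-1) = 1" and vmult: "v (a*b) = v a * v b"
  and vtri: "ple (v (a+b)) (v a + v b)" and vnz: "a \<noteq> 0 \<Longrightarrow> v a \<noteq> 0"
  using val unfolding valuation_def by auto

lemma v_eq_0: "v a = 0 \<longleftrightarrow> a = 0" using v0 vnz by blast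

lemma vneg: "v (-a) = v a"
  by (metis mult_minus1 vmult vm1 mult_1_left)

lemma vdiv: "b \<noteq> 0 \<Longrightarrow> v (a / b) = v a * sinv (v b)"
proof -
  assume b: "b \<noteq> 0"
  have "v a = v (a/b) * v b" using b by (metis vmult nonzero_divide_eq_eq)
  then have "v a * sinv (v b) = v (a/b) * (v b * sinv (v b))" by (simp add: mult.assoc)
  then show ?thesis using sinv[OF vnz[OF b]] by simp
qed

lemma inA: "x \<in> A \<longleftrightarrow> ple (v x) 1" by (simp add: Rcirc_def)

lemma bez_ex: "\<exists>x\<in>A. \<exists>y\<in>A. v (x*a + y*b) = v a + v b"
  using bez unfolding bezout_valuation_def by blast

lemma A0: "0 \<in> A" unfolding inA v0 by (rule ple_0)
lemma A1: "1 \<in> A" unfolding inA v1 by (rule ple_refl)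
lemma A_neg: "a \<in> A \<Longrightarrow> -a \<in> A" unfolding inA vneg .
lemma A_add: "a\<in>A \<Longrightarrow> b\<in>A \<Longrightarrow> a+b\<in>A"
  unfolding inA using vtri ple_11 ple_trans by metis
lemma A_mult: "a\<in>A \<Longrightarrow> b\<in>A \<Longrightarrow> a*b\<in>A"
  unfolding inA vmult using ple_mult1 ple_trans by metis

lemma subring: "subring_of A"
  unfolding subring_of_def using A0 A1 A_neg A_add A_mult by blast

lemma frac_all: "frac_in A = UNIV"
proof -
  have "r \<in> frac_in A" for r
  proof -
    obtain x y where x: "x\<in>A" and y: "y \<in> A" and e: "v (x*r + y*1) = v r + v 1"
      using bez_ex by blast
    define d where "d = x*r+y"
    have vd: "v d = v r + 1" using e v1 d_def by simp
    have nz: "v r + 1 \<noteq> 0"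
    proof
      assume "v r + 1 = 0"
      then have "1 + v r = (0::'b)" by (simp add: add.commute)
      then have "(1::'b) = 0" by (rule add_eq_0_idem)
      then show False by simp
    qed
    have d0: "d \<noteq> 0" using vd nz v0 by auto
    have "ple (v r * sinv (v r + 1)) ((v r + 1) * sinv (v r + 1))"
      by (rule ple_mult[OF ple_add1])
    then have "r/d \<in> A" unfolding inA vdiv[OF d0] vd using sinv[OF nz] by simp
    have "ple (1 * sinv (v r + 1)) ((v r + 1) * sinv (v r + 1))"
      by (rule ple_mult[OF ple_add2])
    then have "1/d \<in> A" unfolding inA vdiv[OF d0] vd v1 using sinv[OF nz] by simp
    have "r = (r/d)/(1/d)" using d0 by simp
    moreover have "1/d \<noteq> 0" using d0 by simp
    ultimately show ?thesis unfolding frac_in_def using \<open>r/d\<in>A\<close> \<open>1/d\<in>A\<close> by blast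
  qed
  then show ?thesis by auto
qed

lemma v_sum: "ple (v (\<Sum>i\<in>F. g i)) (\<Sum>i\<in>F. v (g i))"
proof (induction F rule: infinite_finite_induct)
  case (infinite F)
  then show ?case by (simp add: v0 ple_refl)
next
  case empty
  then show ?case by (simp add: v0 ple_refl)
next
  case (insert a F)
  have "ple (v (g a + (\<Sum>i\<in>F. g i))) (v (g a) + v (\<Sum>i\<in>F. g i))" by (rule vtri)
  also have "ple (v (g a) + v (\<Sum>i\<in>F. g i)) (v (g a) + (\<Sum>i\<in>F. v (g i)))"
    by (rule ple_add_mono[OF ple_refl insert.IH])
  ultimately show ?case using insert ple_trans by fastforce
qed

lemma ideal_gen_ex: "finite F \<Longrightarrow> F \<subseteq> A \<Longrightarrow> \<exists>d\<in>ideal_gen A F. v d = (\<Sum>f\<in>F. v f)"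
proof (induction F rule: finite_induct)
  case empty
  have "0 \<in> ideal_gen A {}" unfolding ideal_gen_def by auto
  then show ?case using v0 by auto
next
  case (insert a F)
  then obtain d c where c: "\<forall>f\<in>F. c f \<in> A" and d: "d = (\<Sum>f\<in>F. c f * f)"
    and vd: "v d = (\<Sum>f\<in>F. v f)"
    unfolding ideal_gen_def by auto
  obtain x y where x: "x\<in>A" "y\<in>A" and e: "v (x*a+y*d) = v a + v d" using bez_ex by blast
  define c' where "c' = (\<lambda>f. if f = a then x else y * c f)"
  have "(\<Sum>f\<in>insert a F. c' f * f) = c' a * a + (\<Sum>f\<in>F. c' f * f)" using insert by simp
  also have "(\<Sum>f\<in>F. c' f * f) = (\<Sum>f\<in>F. y * (c f * f))"
    using insert(2) unfolding c'_def by (intro sum.cong) auto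
  also have "\<dots> = y * d" using d by (simp add: sum_distrib_left)
  finally have s: "x*a + y*d = (\<Sum>f\<in>insert a F. c' f * f)" unfolding c'_def by simp
  have "\<forall>f\<in>insert a F. c' f \<in> A" using c x A_mult unfolding c'_def by auto
  then have "x*a+y*d \<in> ideal_gen A (insert a F)" unfolding ideal_gen_def using s by blast
  moreover have "v (x*a+y*d) = (\<Sum>f\<in>insert a F. v f)" using e vd insert by simp
  ultimately show ?case by blast
qed

lemma bezout_dom: "bezout_domain A"
  unfolding bezout_domain_def
proof (intro conjI allI impI)
  show "subring_of A" by (rule subring)
  fix F assume "finite F \<and> F \<subseteq> A"
  then have F: "finite F" "F \<subseteq> A" by auto
  obtain d where d: "d \<in> ideal_gen A F" and vd: "v d = (\<Sum>f\<in>F. v f)"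
    using ideal_gen_ex F by blast
  have dA: "d \<in> A" unfolding inA vd using F by (intro sum_ple_1) (auto simp: inA)
  have "ideal_gen A F = {x * d | x. x \<in> A}"
  proof (intro set_eqI iffI)
    fix e assume "e \<in> ideal_gen A F"
    then obtain c where c: "\<forall>f\<in>F. c f \<in> A" and e: "e = (\<Sum>f\<in>F. c f * f)"
      unfolding ideal_gen_def by auto
    have ve: "ple (v e) (v d)"
    proof -
      have "ple (v e) (\<Sum>f\<in>F. v (c f * f))" using e v_sum by simp
      moreover have "ple (\<Sum>f\<in>F. v (c f * f)) (\<Sum>f\<in>F. v f)"
        by (rule ple_sum_mono) (use c in \<open>auto simp: vmult inA intro: ple_mult1\<close>)
      ultimately show ?thesis using vd ple_trans by metis
    qed
    show "e \<in> {x * d | x. x \<in> A}"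
    proof (cases "d = 0")
      case True
      then have "v e = 0" using ve v0 ple_zero by simp
      then have "e = 0" using v_eq_0 by simp
      then show ?thesis using A0 True by auto
    next
      case False
      have "ple (v e * sinv (v d)) (v d * sinv (v d))" by (rule ple_mult[OF ve])
      then have "e/d \<in> A" unfolding inA vdiv[OF False] using sinv[OF vnz[OF False]] by simp
      moreover have "e = (e/d) * d" using False by simp
      ultimately show ?thesis by blast
    qed
  next
    fix e assume "e \<in> {x * d | x. x \<in> A}"
    then obtain x where x: "x \<in> A" "e = x * d" by auto
    from d obtain c where c: "\<forall>f\<in>F. c f \<in> A" and dd: "d = (\<Sum>f\<in>F. c f * f)"
      unfolding ideal_gen_def by auto
    have "e = (\<Sum>f\<in>F. (x * c f) * f)" using x dd by (simp add: sum_distrib_left mult.assoc)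
    moreover have "\<forall>f\<in>F. x * c f \<in> A" using c x A_mult by auto
    ultimately show "e \<in> ideal_gen A F" unfolding ideal_gen_def
      by (intro CollectI exI[of _ "\<lambda>f. x * c f"]) simp
  qed
  then show "\<exists>d\<in>A. ideal_gen A F = {x * d | x. x \<in> A}" using dA by blast
qed


lemma units: "units_in A = {u. v u = 1}"
proof (intro set_eqI iffI)
  fix u assume "u \<in> units_in A"
  then obtain w where u: "u \<in> A" and w: "w \<in> A" and uw: "u * w = 1" unfolding units_in_def by auto
  have e: "v u * v w = 1" using uw vmult v1 by metis
  have "ple (v u * v w) (v w)" using u inA ple_mult1 by blast
  then have "ple 1 (v w)" using e by simp
  then have "v w = 1" using w inA ple_antisym by blast
  then show "u \<in> {u. v u = 1}" using e by simp
next
  fix u assume "u \<in> {u. v u = 1}"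
  then have vu: "v u = 1" by simp
  then have u0: "u \<noteq> 0" using v0 by auto
  have "v u * v (inverse u) = 1" using vmult[of u "inverse u"] u0 v1 by simp
  then have vi: "v (inverse u) = 1" using vu by simp
  show "u \<in> units_in A" unfolding units_in_def using vu vi u0
    by (auto intro!: bexI[of _ "inverse u"] simp: inA ple_refl)
qed

lemma gclass_eq: "gclass A a = {c. v c = v a}"
proof (intro set_eqI iffI)
  fix c assume "c \<in> gclass A a"
  then obtain u where "v u = 1" "c = a * u" unfolding gclass_def units by auto
  then show "c \<in> {c. v c = v a}" by (simp add: vmult)
next
  fix c assume "c \<in> {c. v c = v a}"
  then have vc: "v c = v a" by simp
  show "c \<in> gclass A a"
  proof (cases "a = 0")
    case True
    then have "c = 0" using vc v0 v_eq_0 by simp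
    then show ?thesis unfolding gclass_def units using True v1 by auto
  next
    case False
    have "v (c / a) = 1" using vdiv[OF False] vc sinv[OF vnz[OF False]] by simp
    moreover have "c = a * (c / a)" using False by simp
    ultimately show ?thesis unfolding gclass_def units by blast
  qed
qed

definition G :: "'b \<Rightarrow> 'a set" where "G s = {c. v c = s}"

definition val :: "'a set \<Rightarrow> 'b" where "val p = v (SOME c. c \<in> p)"

lemma gclass_G: "gclass A a = G (v a)" unfolding gclass_eq G_def ..

lemma some_G: "v (SOME c. c \<in> G s) = s"
proof -
  obtain c where "v c = s" using sur by (metis surjD)
  then have "\<exists>c. c \<in> G s" unfolding G_def by auto
  then have "(SOME c. c \<in> G s) \<in> G s" by (rule someI_ex)
  then show ?thesis unfolding G_def by simp
qed

lemma val_G: "val (G s) = s" unfolding val_def by (rule some_G)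

lemma G_inj: "G s = G t \<longleftrightarrow> s = t" using val_G by metis

lemma gamma_mult_G: "gamma_mult A (G s) (G t) = G (s*t)"
  unfolding gamma_mult_def gclass_G vmult some_G ..

lemma ple_divides: "ple (v a) (v d) \<Longrightarrow> divides_in A d a"
proof (cases "d = 0")
  case True
  assume "ple (v a) (v d)"
  then have "a = 0" using True v0 ple_zero v_eq_0 by metis
  then show ?thesis unfolding divides_in_def using A0 True by auto
next
  case False
  assume "ple (v a) (v d)"
  then have "ple (v a * sinv (v d)) (v d * sinv (v d))" by (rule ple_mult)
  then have "a/d \<in> A" unfolding inA vdiv[OF False] using sinv[OF vnz[OF False]] by simp
  moreover have "a = (a/d) * d" using False by simp
  ultimately show ?thesis unfolding divides_in_def by blast
qed

lemma divides_ple: "divides_in A d a \<Longrightarrow> ple (v a) (v d)"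
proof -
  assume "divides_in A d a"
  then obtain x where "x \<in> A" "a = x * d" unfolding divides_in_def by blast
  then show ?thesis using ple_mult1[of "v x" "v d"] by (simp add: inA vmult)
qed

lemma gcd_ex: "a \<in> A \<Longrightarrow> b \<in> A \<Longrightarrow> \<exists>d. is_gcd_in A a b d \<and> v d = v a + v b"
proof -
  assume a: "a \<in> A" and b: "b \<in> A"
  obtain x y where x: "x\<in>A" "y\<in>A" and e: "v (x*a+y*b) = v a + v b" using bez_ex by blast
  define d where "d = x*a+y*b"
  have dA: "d \<in> A" unfolding d_def using a b x A_add A_mult by blast
  have "divides_in A d a" by (rule ple_divides) (simp add: e d_def ple_add1)
  moreover have "divides_in A d b" by (rule ple_divides) (simp add: e d_def ple_add2)
  moreover have "divides_in A g d" if g: "g \<in> A" "divides_in A g a" "divides_in A g b" for g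
  proof -
    obtain s t where st: "s\<in>A" "t\<in>A" "a = s*g" "b = t*g" using g unfolding divides_in_def by auto
    have "d = (x*s+y*t)*g" unfolding d_def st by (simp add: algebra_simps)
    moreover have "x*s+y*t \<in> A" using st x A_add A_mult by blast
    ultimately show ?thesis unfolding divides_in_def by blast
  qed
  ultimately show ?thesis unfolding is_gcd_in_def using dA e d_def by blast
qed

lemma gcd_v: "a \<in> A \<Longrightarrow> b \<in> A \<Longrightarrow> is_gcd_in A a b d \<Longrightarrow> v d = v a + v b"
proof -
  assume a: "a \<in> A" and b: "b \<in> A" and d: "is_gcd_in A a b d"
  obtain d0 where d0: "is_gcd_in A a b d0" and vd0: "v d0 = v a + v b" using gcd_ex a b by blast
  have "divides_in A d d0" using d d0 unfolding is_gcd_in_def by blast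
  moreover have "divides_in A d0 d" using d d0 unfolding is_gcd_in_def by blast
  ultimately show ?thesis using divides_ple ple_antisym vd0 by metis
qed

lemma G_A: "ple s 1 \<Longrightarrow> c \<in> G s \<Longrightarrow> c \<in> A" unfolding G_def inA by simp

lemma gamma_add_G: "ple s 1 \<Longrightarrow> ple t 1 \<Longrightarrow> gamma_add A (G s) (G t) = G (s+t)"
proof -
  assume s: "ple s 1" and t: "ple t 1"
  define a where "a = (SOME c. c \<in> G s)"
  define b where "b = (SOME c. c \<in> G t)"
  have va: "v a = s" and vb: "v b = t" unfolding a_def b_def by (rule some_G)+
  have aA: "a \<in> A" and bA: "b \<in> A" using va vb s t inA by auto
  have "\<exists>d. is_gcd_in A a b d" using gcd_ex[OF aA bA] by blast
  then have "is_gcd_in A a b (SOME d. is_gcd_in A a b d)" by (rule someI_ex)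
  then have "v (SOME d. is_gcd_in A a b d) = s + t" using gcd_v[OF aA bA] va vb by simp
  then show ?thesis unfolding gamma_add_def a_def[symmetric] b_def[symmetric] gclass_G by simp
qed

lemma Gamma_char: "p \<in> Gamma A \<longleftrightarrow> (\<exists>s. ple s 1 \<and> p = G s)"
proof
  assume "p \<in> Gamma A"
  then obtain a where "a \<in> A" "p = G (v a)" unfolding Gamma_def gclass_G by auto
  then show "\<exists>s. ple s 1 \<and> p = G s" using inA by blast
next
  assume "\<exists>s. ple s 1 \<and> p = G s"
  then obtain s where s: "ple s 1" "p = G s" by blast
  obtain a where "v a = s" using sur by (metis surjD)
  then show "p \<in> Gamma A" unfolding Gamma_def gclass_G using s inA by auto
qed

lemma fg_pairs_char: "z \<in> fg_pairs A \<longleftrightarrow> (\<exists>s t. ple s 1 \<and> ple t 1 \<and> t \<noteq> 0 \<and> z = (G s, G t))"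
  unfolding fg_pairs_def gclass_G v0 using Gamma_char G_inj by (cases z) auto

definition ratio :: "'a set \<times> 'a set \<Rightarrow> 'b" where
  "ratio z = val (fst z) * sinv (val (snd z))"

lemma fg_class_G: "t \<noteq> 0 \<Longrightarrow> fg_class A (G s, G t) = {z \<in> fg_pairs A. ratio z = s * sinv t}"
proof -
  assume t: "t \<noteq> 0"
  have "(gamma_mult A (G s) (snd z) = gamma_mult A (fst z) (G t)) = (ratio z = s * sinv t)"
    if z: "z \<in> fg_pairs A" for z
  proof -
    obtain a b where ab: "b \<noteq> 0" "z = (G a, G b)" using z fg_pairs_char by blast
    show ?thesis unfolding ab ratio_def using ratio_eq[OF ab(1) t, of s a]
      by (auto simp: gamma_mult_G G_inj val_G)
  qed
  then show ?thesis unfolding fg_class_def by auto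
qed

definition Phi :: "('a set \<times> 'a set) set \<Rightarrow> 'b" where
  "Phi X = ratio (SOME z. z \<in> X)"

lemma Phi_G: "ple s 1 \<Longrightarrow> ple t 1 \<Longrightarrow> t \<noteq> 0 \<Longrightarrow> Phi (fg_class A (G s, G t)) = s * sinv t"
proof -
  assume s: "ple s 1" and t: "ple t 1" and t0: "t \<noteq> 0"
  have "(G s, G t) \<in> fg_class A (G s, G t)"
    unfolding fg_class_G[OF t0] using s t t0 fg_pairs_char by (auto simp: ratio_def val_G)
  then have "(SOME z. z \<in> fg_class A (G s, G t)) \<in> fg_class A (G s, G t)" by (rule someI)
  then show ?thesis unfolding Phi_def fg_class_G[OF t0] by simp
qed

lemma FracGamma_char: "X \<in> FracGamma A \<longleftrightarrow>
   (\<exists>s t. ple s 1 \<and> ple t 1 \<and> t \<noteq> 0 \<and> X = fg_class A (G s, G t))"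
proof
  assume "X \<in> FracGamma A"
  then obtain z where z: "z \<in> fg_pairs A" "X = fg_class A z" unfolding FracGamma_def by blast
  then obtain s t where "ple s 1" "ple t 1" "t \<noteq> 0" "z = (G s, G t)" using fg_pairs_char by blast
  then show "\<exists>s t. ple s 1 \<and> ple t 1 \<and> t \<noteq> 0 \<and> X = fg_class A (G s, G t)" using z by blast
next
  assume "\<exists>s t. ple s 1 \<and> ple t 1 \<and> t \<noteq> 0 \<and> X = fg_class A (G s, G t)"
  then obtain s t where st: "ple s 1" "ple t 1" "t \<noteq> 0" "X = fg_class A (G s, G t)" by blast
  then have "(G s, G t) \<in> fg_pairs A" using fg_pairs_char by blast
  then show "X \<in> FracGamma A" unfolding FracGamma_def st(4) by (rule imageI)
qed

lemma FG_set: "X \<in> FracGamma A \<Longrightarrow> X = {z \<in> fg_pairs A. ratio z = Phi X}"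
proof -
  assume "X \<in> FracGamma A"
  then obtain s t where st: "ple s 1" "ple t 1" "t \<noteq> 0" "X = fg_class A (G s, G t)"
    using FracGamma_char by blast
  have "Phi X = s * sinv t" using st(4) Phi_G[OF st(1-3)] by simp
  then show ?thesis using st(4) fg_class_G[OF st(3)] by simp
qed

lemma FG_some: "X \<in> FracGamma A \<Longrightarrow>
  \<exists>s t. ple s 1 \<and> ple t 1 \<and> t \<noteq> 0 \<and> (SOME z. z \<in> X) = (G s, G t) \<and> Phi X = s * sinv t"
proof -
  assume X: "X \<in> FracGamma A"
  then obtain s t where st: "ple s 1" "ple t 1" "t \<noteq> 0" "X = fg_class A (G s, G t)"
    using FracGamma_char by blast
  have "(G s, G t) \<in> X"
    unfolding st(4) fg_class_G[OF st(3)] using st fg_pairs_char by (auto simp: ratio_def val_G)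
  then have "(SOME z. z \<in> X) \<in> X" by (rule someI)
  then have "(SOME z. z \<in> X) \<in> fg_pairs A" using FG_set[OF X] by blast
  then obtain s' t' where "ple s' 1" "ple t' 1" "t' \<noteq> 0" "(SOME z. z \<in> X) = (G s', G t')"
    using fg_pairs_char by blast
  then show ?thesis unfolding Phi_def ratio_def by (auto simp: val_G)
qed

lemma Phi_mult: "X \<in> FracGamma A \<Longrightarrow> Y \<in> FracGamma A \<Longrightarrow>
   Phi (fg_mult A X Y) = Phi X * Phi Y"
proof -
  assume X: "X \<in> FracGamma A" and Y: "Y \<in> FracGamma A"
  obtain s t where st: "ple s 1" "ple t 1" "t \<noteq> 0" "(SOME z. z \<in> X) = (G s, G t)" "Phi X = s * sinv t"
    using FG_some[OF X] by blast
  obtain s' t' where st': "ple s' 1" "ple t' 1" "t' \<noteq> 0" "(SOME z. z \<in> Y) = (G s', G t')" "Phi Y = s' * sinv t'"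
    using FG_some[OF Y] by blast
  have "fg_mult A X Y = fg_class A (G (s*s'), G (t*t'))"
    unfolding fg_mult_def Let_def st(4) st'(4) by (simp add: gamma_mult_G)
  moreover have "ple (s*s') 1" using st(1) st'(1) ple_mult1 ple_trans by blast
  moreover have "ple (t*t') 1" using st(2) st'(2) ple_mult1 ple_trans by blast
  moreover have "t*t' \<noteq> 0" using sf_nzd st(3) st'(3) by blast
  ultimately have "Phi (fg_mult A X Y) = (s*s') * sinv (t*t')" using Phi_G by simp
  also have "\<dots> = Phi X * Phi Y" unfolding sinv_mult[OF st(3) st'(3)] st(5) st'(5)
    by (simp add: ac_simps)
  finally show ?thesis .
qed

lemma Phi_add: "X \<in> FracGamma A \<Longrightarrow> Y \<in> FracGamma A \<Longrightarrow>
   Phi (fg_add A X Y) = Phi X + Phi Y"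
proof -
  assume X: "X \<in> FracGamma A" and Y: "Y \<in> FracGamma A"
  obtain s t where st: "ple s 1" "ple t 1" "t \<noteq> 0" "(SOME z. z \<in> X) = (G s, G t)" "Phi X = s * sinv t"
    using FG_some[OF X] by blast
  obtain s' t' where st': "ple s' 1" "ple t' 1" "t' \<noteq> 0" "(SOME z. z \<in> Y) = (G s', G t')" "Phi Y = s' * sinv t'"
    using FG_some[OF Y] by blast
  have p1: "ple (s*t') 1" using st(1) st'(2) ple_mult1 ple_trans by blast
  have p2: "ple (s'*t) 1" using st(2) st'(1) ple_mult1 ple_trans by blast
  have "fg_add A X Y = fg_class A (G (s*t' + s'*t), G (t*t'))"
    unfolding fg_add_def Let_def st(4) st'(4) by (simp add: gamma_mult_G gamma_add_G[OF p1 p2])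
  moreover have "ple (s*t' + s'*t) 1" using p1 p2 ple_11 by blast
  moreover have "ple (t*t') 1" using st(2) st'(2) ple_mult1 ple_trans by blast
  moreover have "t*t' \<noteq> 0" using sf_nzd st(3) st'(3) by blast
  ultimately have "Phi (fg_add A X Y) = (s*t' + s'*t) * sinv (t*t')" using Phi_G by simp
  also have "\<dots> = (s * sinv t) * (t' * sinv t') + (s' * sinv t') * (t * sinv t)"
    unfolding sinv_mult[OF st(3) st'(3)] by (simp add: algebra_simps)
  also have "\<dots> = Phi X + Phi Y" using st(5) st'(5) sinv[OF st(3)] sinv[OF st'(3)] by simp
  finally show ?thesis .
qed

lemma Phi_inj: "inj_on Phi (FracGamma A)"
  by (rule inj_onI) (metis FG_set)

lemma v_frac: "\<exists>a b. a \<in> A \<and> b \<in> A \<and> b \<noteq> 0 \<and> r = a / b"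
  using frac_all unfolding frac_in_def by blast

lemma Phi_frac: "a \<in> A \<Longrightarrow> b \<in> A \<Longrightarrow> b \<noteq> 0 \<Longrightarrow> Phi (fg_class A (G (v a), G (v b))) = v (a / b)"
  using Phi_G inA vnz vdiv by simp

lemma Phi_surj: "Phi ` FracGamma A = UNIV"
proof (intro set_eqI iffI)
  fix c :: 'b
  obtain r where r: "c = v r" using sur by (metis surjD)
  obtain a b where ab: "a \<in> A" "b \<in> A" "b \<noteq> 0" "r = a / b" using v_frac by blast
  have "fg_class A (G (v a), G (v b)) \<in> FracGamma A"
    unfolding FracGamma_char using ab inA vnz by blast
  then show "c \<in> Phi ` FracGamma A" using Phi_frac[OF ab(1-3)] ab(4) r by force
qed auto

lemma Phi_frac_pi: "v r = Phi (frac_pi A r)"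
proof -
  obtain a b where ab: "(SOME (a, b). a \<in> A \<and> b \<in> A \<and> b \<noteq> 0 \<and> r = a / b) = (a, b)"
    by (cases "SOME (a, b). a \<in> A \<and> b \<in> A \<and> b \<noteq> 0 \<and> r = a / b") auto
  have "\<exists>z. (\<lambda>(a, b). a \<in> A \<and> b \<in> A \<and> b \<noteq> 0 \<and> r = a / b) z" using v_frac by auto
  then have "(\<lambda>(a, b). a \<in> A \<and> b \<in> A \<and> b \<noteq> 0 \<and> r = a / b)
     (SOME (a, b). a \<in> A \<and> b \<in> A \<and> b \<noteq> 0 \<and> r = a / b)" by (rule someI_ex)
  then have P: "a \<in> A" "b \<in> A" "b \<noteq> 0" "r = a / b" unfolding ab by auto
  have "frac_pi A r = fg_class A (G (v a), G (v b))"
    unfolding frac_pi_def ab gclass_G by simp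
  then show ?thesis using Phi_frac[OF P(1-3)] P(4) by simp
qed

lemma Phi_zero: "Phi (fg_zero A) = 0"
  unfolding fg_zero_def gclass_G v0 v1 using Phi_G[OF ple_0[of 1] ple_refl[of 1] one_neq_zero] by simp

lemma Phi_one: "Phi (fg_one A) = 1"
  unfolding fg_one_def gclass_G v1 using Phi_G[OF ple_refl[of 1] ple_refl[of 1] one_neq_zero] sinv_1 by simp

end

theorem lemma2p15:
  fixes v :: "'a::field \<Rightarrow> 'b::idem_semifield"
  assumes "valuation v" and "surj v" and "bezout_valuation v"
  shows "frac_in (Rcirc v) = UNIV \<and> bezout_domain (Rcirc v) \<and>
    (\<exists>\<Phi>. bij_betw \<Phi> (FracGamma (Rcirc v)) (UNIV :: 'b set) \<and>
        (\<forall>X\<in>FracGamma (Rcirc v). \<forall>Y\<in>FracGamma (Rcirc v).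
            \<Phi> (fg_add (Rcirc v) X Y) = \<Phi> X + \<Phi> Y \<and>
            \<Phi> (fg_mult (Rcirc v) X Y) = \<Phi> X * \<Phi> Y) \<and>
        \<Phi> (fg_zero (Rcirc v)) = 0 \<and> \<Phi> (fg_one (Rcirc v)) = 1 \<and>
        (\<forall>r. v r = \<Phi> (frac_pi (Rcirc v) r)))"
proof -
  interpret bzv v using assms by unfold_locales
  show ?thesis
    using frac_all bezout_dom Phi_inj Phi_surj Phi_add Phi_mult Phi_zero Phi_one Phi_frac_pi
    unfolding bij_betw_def by blast
qed

end
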